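(* Let $m\ge 1$. In the checker game on $2m+1$ positions, each of the configurations $O(wb)^m$ and $(wb)^mO$ can be transformed into the configuration $w^mOb^m$ by a sequence of exactly $\frac{m(m+1)}{2}$ legal moves.
   Context: Positions $1,\dots,2m+1$ in a row; a configuration is a word over $\{b,w,O\}$ with exactly one $O$, where $b$ denotes a black checker, $w$ a white checker and $O$ the vacancy; $(wb)^m$ denotes $wb$ repeated $m$ times. A legal move is either a slide (a checker adjacent to the vacancy moves into it) or a jump (a checker at distance two from the vacancy jumps over the checker between them into the vacancy). *)

theory Defs
  imports Main
begin

datatype cell = Bc | Wc | Oc

text \<open>A configuration is a list over {b,w,O} with exactly one vacancy O.
Positions are 0-indexed here (position k+1 in the paper is index k).\<close>

definition is_config :: "cell list \<Rightarrow> bool" where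
  "is_config c \<longleftrightarrow> length (filter (\<lambda>x. x = Oc) c) = 1"

definition legal_move :: "cell list \<Rightarrow> cell list \<Rightarrow> bool" where
  "legal_move c d \<longleftrightarrow> is_config c \<and>
     (\<exists>i j. i < length c \<and> j < length c \<and> c ! i = Oc \<and> c ! j \<noteq> Oc \<and>
        (((i = j + 1 \<or> j = i + 1)) \<or>
         ((i = j + 2 \<or> j = i + 2) \<and> c ! ((i + j) div 2) \<noteq> Oc)) \<and>
        d = c[i := c ! j, j := Oc])"

definition wb_pow :: "nat \<Rightarrow> cell list" where
  "wb_pow m = concat (replicate m [Wc, Bc])"

end

theory Submission
  imports Defs
begin

definition bw :: "nat \<Rightarrow> cell list" where
  "bw m = concat (replicate m [Bc, Wc])"

lemma rp_trans: "(P ^^ m) x y \<Longrightarrow> (P ^^ n) y z \<Longrightarrow> (P ^^ (m + n)) x z"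
  by (auto simp: relpowp_add)

lemma rp_trans': "(P ^^ m) x y \<Longrightarrow> (P ^^ n) y z \<Longrightarrow> k = m + n \<Longrightarrow> (P ^^ k) x z"
  using rp_trans by simp

lemma noO_wb[simp]: "Oc \<notin> set (wb_pow k)" by (induct k) (auto simp: wb_pow_def)
lemma noO_bw[simp]: "Oc \<notin> set (bw k)" by (induct k) (auto simp: bw_def)
lemma noO_rep[simp]: "x \<noteq> Oc \<Longrightarrow> Oc \<notin> set (replicate k x)" by auto

lemma wb_Suc: "wb_pow (Suc k) = Wc # Bc # wb_pow k" by (simp add: wb_pow_def)
lemma bw_Suc: "bw (Suc k) = Bc # Wc # bw k" by (simp add: bw_def)
lemma wb_Suc': "wb_pow (Suc k) = wb_pow k @ [Wc, Bc]"
  by (induct k) (auto simp: wb_pow_def)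
lemma bw_Suc': "bw (Suc k) = bw k @ [Bc, Wc]"
  by (induct k) (auto simp: bw_def)
lemma wb_bw: "wb_pow k @ [Wc] = Wc # bw k"
  by (induct k) (auto simp: wb_Suc bw_Suc wb_pow_def bw_def)
lemma wb_bw2: "wb_pow (Suc k) = Wc # bw k @ [Bc]"
  by (induct k) (auto simp: wb_Suc bw_Suc wb_pow_def bw_def)

lemma filt: "Oc \<notin> set X \<Longrightarrow> filter (\<lambda>x. x = Oc) X = []"
  by (induct X) auto

lemma mv_gen:
  assumes "Oc \<notin> set X" "Oc \<notin> set Y" "legal_move c d"
  shows "legal_move c d" using assms by simp

lemma mv_BO: assumes "Oc \<notin> set X" "Oc \<notin> set Y"
  shows "legal_move (X @ [Bc, Oc] @ Y) (X @ [Oc, Bc] @ Y)"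
  unfolding legal_move_def is_config_def
  apply (intro conjI)
   apply (simp add: filt assms)
  apply (rule exI[of _ "length X + 1"], rule exI[of _ "length X"])
  apply (simp add: nth_append list_update_append)
  done

lemma mv_OW: assumes "Oc \<notin> set X" "Oc \<notin> set Y"
  shows "legal_move (X @ [Oc, Wc] @ Y) (X @ [Wc, Oc] @ Y)"
  unfolding legal_move_def is_config_def
  apply (intro conjI)
   apply (simp add: filt assms)
  apply (rule exI[of _ "length X"], rule exI[of _ "length X + 1"])
  apply (simp add: nth_append list_update_append)
  done

lemma mv_OBW: assumes "Oc \<notin> set X" "Oc \<notin> set Y"
  shows "legal_move (X @ [Oc, Bc, Wc] @ Y) (X @ [Wc, Bc, Oc] @ Y)"
  unfolding legal_move_def is_config_def
  apply (intro conjI)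
   apply (simp add: filt assms)
  apply (rule exI[of _ "length X"], rule exI[of _ "length X + 2"])
  apply (simp add: nth_append list_update_append)
  done

lemma mv_BWO: assumes "Oc \<notin> set X" "Oc \<notin> set Y"
  shows "legal_move (X @ [Bc, Wc, Oc] @ Y) (X @ [Oc, Wc, Bc] @ Y)"
  unfolding legal_move_def is_config_def
  apply (intro conjI)
   apply (simp add: filt assms)
  apply (rule exI[of _ "length X + 2"], rule exI[of _ "length X"])
  apply (simp add: nth_append list_update_append)
  done

lemma sweepR: "Oc \<notin> set L \<Longrightarrow> Oc \<notin> set R \<Longrightarrow>
  (legal_move ^^ k) (L @ Oc # bw k @ R) (L @ wb_pow k @ Oc # R)"
proof (induct k arbitrary: L)
  case 0 then show ?case by (simp add: wb_pow_def bw_def)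
next
  case (Suc k)
  have "legal_move (L @ Oc # bw (Suc k) @ R) ((L @ [Wc, Bc]) @ Oc # bw k @ R)"
    using mv_OBW[of L "bw k @ R"] Suc.prems by (simp add: bw_Suc)
  moreover have "(legal_move ^^ k) ((L @ [Wc, Bc]) @ Oc # bw k @ R) ((L @ [Wc, Bc]) @ wb_pow k @ Oc # R)"
    using Suc.hyps[of "L @ [Wc, Bc]"] Suc.prems by simp
  ultimately show ?case using relpowp_Suc_I2 by (fastforce simp: wb_Suc)
qed

lemma sweepL: "Oc \<notin> set L \<Longrightarrow> Oc \<notin> set R \<Longrightarrow>
  (legal_move ^^ k) (L @ Wc # bw k @ Oc # R) (L @ Wc # Oc # wb_pow k @ R)"
proof (induct k arbitrary: R)
  case 0 then show ?case by (simp add: wb_pow_def bw_def)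
next
  case (Suc k)
  have "legal_move ((L @ Wc # bw k) @ [Bc, Wc, Oc] @ R) ((L @ Wc # bw k) @ [Oc, Wc, Bc] @ R)"
    using mv_BWO[of "L @ Wc # bw k" R] Suc.prems by simp
  moreover have "(legal_move ^^ k) (L @ Wc # bw k @ Oc # ([Wc, Bc] @ R)) (L @ Wc # Oc # wb_pow k @ ([Wc, Bc] @ R))"
    using Suc by simp
  ultimately show ?case using relpowp_Suc_I2 by (fastforce simp: bw_Suc' wb_Suc')
qed

lemma Qlem: "(legal_move ^^ (k * (k + 1) div 2))
   (replicate a Wc @ wb_pow k @ Oc # replicate c Bc)
   (replicate (a + k) Wc @ Oc # replicate (c + k) Bc)"
proof (induct k arbitrary: a c rule: less_induct)
  case (less k)
  show ?case
  proof (cases k)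
    case 0 then show ?thesis by (simp add: wb_pow_def)
  next
    case (Suc k1)
    note k1 = Suc
    show ?thesis
    proof (cases k1)
      case 0
      have "legal_move ((replicate a Wc @ [Wc]) @ [Bc, Oc] @ replicate c Bc)
                       ((replicate a Wc @ [Wc]) @ [Oc, Bc] @ replicate c Bc)"
        by (rule mv_BO) auto
      then show ?thesis using k1 0
        by (simp add: wb_Suc wb_pow_def replicate_app_Cons_same relcompp_apply)
    next
      case (Suc j)
      let ?W = "replicate a Wc" and ?B = "replicate c Bc"
      have m1: "legal_move ((?W @ wb_pow (Suc j) @ [Wc]) @ [Bc, Oc] @ ?B)
                       ((?W @ wb_pow (Suc j) @ [Wc]) @ [Oc, Bc] @ ?B)"
        by (rule mv_BO) auto
      have s1: "?W @ wb_pow k @ Oc # ?B = (?W @ wb_pow (Suc j) @ [Wc]) @ [Bc, Oc] @ ?B"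
        using k1 Suc by (simp add: wb_Suc')
      have s2: "(?W @ wb_pow (Suc j) @ [Wc]) @ [Oc, Bc] @ ?B = ?W @ Wc # bw (Suc j) @ Oc # (Bc # ?B)"
        by (simp add: wb_bw)
      have m2: "(legal_move ^^ Suc j) (?W @ Wc # bw (Suc j) @ Oc # (Bc # ?B)) (?W @ Wc # Oc # wb_pow (Suc j) @ (Bc # ?B))"
        by (rule sweepL) auto
      have m3: "legal_move (?W @ [Oc, Wc] @ (bw j @ Bc # Bc # ?B)) (?W @ [Wc, Oc] @ (bw j @ Bc # Bc # ?B))"
        by (rule mv_OW) auto
      have s3: "?W @ Wc # Oc # wb_pow (Suc j) @ (Bc # ?B) = [Wc] @ ?W @ [Oc, Wc] @ (bw j @ Bc # Bc # ?B)"
        by (simp add: wb_bw2 replicate_app_Cons_same flip: replicate_Suc)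
      have m3': "legal_move ([Wc] @ ?W @ [Oc, Wc] @ (bw j @ Bc # Bc # ?B)) ([Wc] @ ?W @ [Wc, Oc] @ (bw j @ Bc # Bc # ?B))"
        using mv_OW[of "[Wc] @ ?W" "bw j @ Bc # Bc # ?B"] by simp
      have s4: "[Wc] @ ?W @ [Wc, Oc] @ (bw j @ Bc # Bc # ?B) = replicate (a+2) Wc @ Oc # bw j @ replicate (c+2) Bc"
        by (simp add: replicate_app_Cons_same numeral_2_eq_2)
      have m4: "(legal_move ^^ j) (replicate (a+2) Wc @ Oc # bw j @ replicate (c+2) Bc)
                                  (replicate (a+2) Wc @ wb_pow j @ Oc # replicate (c+2) Bc)"
        by (rule sweepR) auto
      have m5: "(legal_move ^^ (j * (j + 1) div 2)) (replicate (a+2) Wc @ wb_pow j @ Oc # replicate (c+2) Bc)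
          (replicate (a + 2 + j) Wc @ Oc # replicate (c + 2 + j) Bc)"
        using less(1)[of j "a+2" "c+2"] k1 Suc by (simp add: add.commute add.left_commute)
      have e: "replicate (a + 2 + j) Wc @ Oc # replicate (c + 2 + j) Bc = replicate (a + k) Wc @ Oc # replicate (c + k) Bc"
        using k1 Suc by (simp add: add.assoc)
      have cnt: "k * (k + 1) div 2 = 1 + (Suc j + (1 + (j + j * (j + 1) div 2)))"
        using k1 Suc by simp
      have "(legal_move ^^ (1 + (Suc j + (1 + (j + j * (j + 1) div 2)))))
          (?W @ wb_pow k @ Oc # ?B) (replicate (a + 2 + j) Wc @ Oc # replicate (c + 2 + j) Bc)"
        apply (rule rp_trans[where y = "(?W @ wb_pow (Suc j) @ [Wc]) @ [Oc, Bc] @ ?B"])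
         apply (simp only: s1 relpowp_1, rule m1)
        apply (rule rp_trans[where y = "?W @ Wc # Oc # wb_pow (Suc j) @ (Bc # ?B)"])
         apply (simp only: s2 m2)
        apply (rule rp_trans[where y = "[Wc] @ ?W @ [Wc, Oc] @ (bw j @ Bc # Bc # ?B)"])
         apply (simp only: s3 relpowp_1 m3')
        apply (rule rp_trans[where y = "replicate (a+2) Wc @ wb_pow j @ Oc # replicate (c+2) Bc"])
         apply (simp only: s4 m4)
        apply (rule m5)
        done
      then show ?thesis using cnt e by simp
    qed
  qed
qed


lemma Bc_wb: "Bc # wb_pow n = bw n @ [Bc]"
  by (induct n) (auto simp: wb_Suc bw_Suc wb_pow_def bw_def)

theorem lemma3:
  fixes m :: nat
  assumes "m \<ge> 1"
  shows "(legal_move ^^ (m * (m + 1) div 2)) (Oc # wb_pow m)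
            (replicate m Wc @ [Oc] @ replicate m Bc)
       \<and> (legal_move ^^ (m * (m + 1) div 2)) (wb_pow m @ [Oc])
            (replicate m Wc @ [Oc] @ replicate m Bc)"
proof
  show "(legal_move ^^ (m * (m + 1) div 2)) (wb_pow m @ [Oc])
            (replicate m Wc @ [Oc] @ replicate m Bc)"
    using Qlem[of m 0 0] by simp
next
  obtain n where n: "m = Suc n" using assms by (cases m) auto
  have m1: "legal_move ([] @ [Oc, Wc] @ (Bc # wb_pow n)) ([] @ [Wc, Oc] @ (Bc # wb_pow n))"
    by (rule mv_OW) auto
  have m2: "(legal_move ^^ n) (replicate 1 Wc @ Oc # bw n @ replicate 1 Bc)
      (replicate 1 Wc @ wb_pow n @ Oc # replicate 1 Bc)"
    by (rule sweepR) auto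
  have m3: "(legal_move ^^ (n * (n + 1) div 2)) (replicate 1 Wc @ wb_pow n @ Oc # replicate 1 Bc)
      (replicate (1 + n) Wc @ Oc # replicate (1 + n) Bc)"
    by (rule Qlem)
  have "(legal_move ^^ (1 + (n + n * (n + 1) div 2))) (Oc # wb_pow m)
            (replicate (1 + n) Wc @ Oc # replicate (1 + n) Bc)"
    apply (rule rp_trans[where y = "replicate 1 Wc @ Oc # bw n @ replicate 1 Bc"])
     apply (simp only: relpowp_1)
    using m1 apply (simp add: n wb_Suc Bc_wb)
    apply (rule rp_trans[OF m2 m3])
    done
  moreover have "m * (m + 1) div 2 = 1 + (n + n * (n + 1) div 2)" using n by simp
  ultimately show "(legal_move ^^ (m * (m + 1) div 2)) (Oc # wb_pow m)
            (replicate m Wc @ [Oc] @ replicate m Bc)" using n by simp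
qed

end
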